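(* Let $(\alpha,\beta)\in Q$, let $x^*=\lim_kx_k$ for the GAFS sequence, and let $N=\{i: x^*_i=0\}$, $B=\{i: x^*_i>0\}$. There exist $\delta>0$ and $R>0$ such that for each $k\ge0$ $$\frac{c^Tx_k-c^Tx^*}{\|x_k-x^*\|}\ge\frac1R,\qquad \frac{c^Tx_k-c^Tx^*}{\sum_{i\in N}(x_k)_i}\ge\delta,\qquad \frac{c^Tx_k-c^Tx^*}{\sum_{i\in B}|(x_k)_i-x^*_i|}\ge\delta.$$
   Context: Let $A\in\mathbb{R}^{m\times n}$ have rank $m$, $b\in\mathbb{R}^m$, $c\in\mathbb{R}^n$. Primal LP: $\min c^Tx$ s.t. $Ax=b$, $x\ge 0$. Standing assumptions: the primal has a strictly positive feasible point; $c^Tx$ is not constant on the primal feasible region; the LP has an optimal solution. For $u\in\mathbb{R}^n$, $\gamma(u)=\max\{u_i: u_i>0\}$; $\|\cdot\|$ Euclidean norm. For $x>0$, $X=\mathrm{diag}(x)$. GAFS sequence: fix $\alpha\in(0,1)$, $\beta\in[0,1)$, and $x_0>0$ with $Ax_0=b$. For $k\ge0$ let $X_k=\mathrm{diag}(x_k)$, $y_k=(AX_k^2A^T)^{-1}AX_k^2c$, $s_k=c-A^Ty_k$. Set $x_1=x_0-\alpha\frac{X_0^2s_0}{\gamma(X_0s_0)}$ and, for $k\ge1$, $x_{k+1}=x_k-\alpha\frac{X_k^2s_k}{\gamma(X_ks_k)}+\beta\frac{x_k-x_{k-1}}{\|X_k^{-1}(x_k-x_{k-1})\|_\infty}$ (all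 quantities assumed well defined). $Q=\{(\alpha,\beta): 0<\alpha<1,\ 0\le\beta<1/\phi,\ \alpha+\beta\le 2/3\}$ with $\phi=(1+\sqrt5)/2$. *)

theory Defs
  imports "HOL-Analysis.Analysis"
begin

text \<open>Vectors in R^n are real^'n, the m x n matrix A is real^'n^'m.\<close>

definition diagv :: "real^'n \<Rightarrow> real^'n^'n" where
  "diagv x = (\<chi> i j. if i = j then x $ i else 0)"

definition lp_feasible :: "real^'n^'m \<Rightarrow> real^'m \<Rightarrow> real^'n \<Rightarrow> bool" where
  "lp_feasible A b x \<longleftrightarrow> A *v x = b \<and> (\<forall>i. 0 \<le> x $ i)"

definition lp_standing :: "real^'n^'m \<Rightarrow> real^'m \<Rightarrow> real^'n \<Rightarrow> bool" where
  "lp_standing A b c \<longleftrightarrow>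
     rank A = CARD('m) \<and>
     (\<exists>x. A *v x = b \<and> (\<forall>i. 0 < x $ i)) \<and>
     (\<exists>x y. lp_feasible A b x \<and> lp_feasible A b y \<and> c \<bullet> x \<noteq> c \<bullet> y) \<and>
     (\<exists>x. lp_feasible A b x \<and> (\<forall>y. lp_feasible A b y \<longrightarrow> c \<bullet> x \<le> c \<bullet> y))"

definition gam :: "real^'n \<Rightarrow> real" where
  "gam u = Max {u $ i | i. 0 < u $ i}"

definition dual_y :: "real^'n^'m \<Rightarrow> real^'n \<Rightarrow> real^'n \<Rightarrow> real^'m" where
  "dual_y A c x = matrix_inv (A ** diagv x ** diagv x ** transpose A) *v (A ** diagv x ** diagv x *v c)"

definition slack :: "real^'n^'m \<Rightarrow> real^'n \<Rightarrow> real^'n \<Rightarrow> real^'n" where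
  "slack A c x = c - transpose A *v dual_y A c x"

definition as_step :: "real^'n^'m \<Rightarrow> real^'n \<Rightarrow> real \<Rightarrow> real^'n \<Rightarrow> real^'n" where
  "as_step A c \<alpha> x = (\<alpha> / gam (diagv x *v slack A c x)) *\<^sub>R (diagv x ** diagv x *v slack A c x)"

fun gafs :: "real^'n^'m \<Rightarrow> real^'n \<Rightarrow> real \<Rightarrow> real \<Rightarrow> real^'n \<Rightarrow> nat \<Rightarrow> real^'n" where
  "gafs A c \<alpha> \<beta> x0 0 = x0"
| "gafs A c \<alpha> \<beta> x0 (Suc 0) = x0 - as_step A c \<alpha> x0"
| "gafs A c \<alpha> \<beta> x0 (Suc (Suc k)) =
     (let xp = gafs A c \<alpha> \<beta> x0 k; xk = gafs A c \<alpha> \<beta> x0 (Suc k) in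
       xk - as_step A c \<alpha> xk
          + (\<beta> / infnorm (matrix_inv (diagv xk) *v (xk - xp))) *\<^sub>R (xk - xp))"

definition golden :: real where "golden = (1 + sqrt 5) / 2"

definition Qset :: "(real \<times> real) set" where
  "Qset = {(\<alpha>, \<beta>). 0 < \<alpha> \<and> \<alpha> < 1 \<and> 0 \<le> \<beta> \<and> \<beta> < 1 / golden \<and> \<alpha> + \<beta> \<le> 2 / 3}"

end

theory Submission imports Defs begin

lemma key:
  fixes A :: "real^'n^'m" and c :: "real^'n"
  shows "\<exists>M>0. \<forall>u (p::real^'n). (\<forall>i. 0 < p$i) \<longrightarrow> A *v u = 0 \<longrightarrow>
     (\<forall>w. A *v w = 0 \<longrightarrow> c \<bullet> w = (\<Sum>i\<in>UNIV. p$i * u$i * w$i)) \<longrightarrow> norm u \<le> M * (c \<bullet> u)"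
proof (rule ccontr)
  assume neg: "\<not> ?thesis"
  have "\<forall>k::nat. \<exists>u p. (\<forall>i. 0 < p$i) \<and> A *v u = 0 \<and>
     (\<forall>w. A *v w = 0 \<longrightarrow> c \<bullet> w = (\<Sum>i\<in>UNIV. p$i * u$i * w$i)) \<and> norm u > (real k + 1) * (c \<bullet> u)"
  proof
    fix k :: nat
    have pos: "real k + 1 > 0" by simp
    have "\<not> (\<forall>u (p::real^'n). (\<forall>i. 0 < p$i) \<longrightarrow> A *v u = 0 \<longrightarrow>
     (\<forall>w. A *v w = 0 \<longrightarrow> c \<bullet> w = (\<Sum>i\<in>UNIV. p$i * u$i * w$i)) \<longrightarrow> norm u \<le> (real k + 1) * (c \<bullet> u))"
      using neg pos by blast
    thus "\<exists>u p. (\<forall>i. 0 < p$i) \<and> A *v u = 0 \<and>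
     (\<forall>w. A *v w = 0 \<longrightarrow> c \<bullet> w = (\<Sum>i\<in>UNIV. p$i * u$i * w$i)) \<and> norm u > (real k + 1) * (c \<bullet> u)"
      by (simp only: not_all not_imp not_le)
  qed
  then have "\<forall>k::nat. \<exists>up. (\<forall>i. 0 < snd up$i) \<and> A *v fst up = 0 \<and>
     (\<forall>w. A *v w = 0 \<longrightarrow> c \<bullet> w = (\<Sum>i\<in>UNIV. snd up$i * fst up$i * w$i)) \<and> norm (fst up) > (real k + 1) * (c \<bullet> fst up)"
    by simp
  then obtain F where F: "\<forall>k::nat. (\<forall>i. 0 < snd (F k)$i) \<and> A *v fst (F k) = 0 \<and>
     (\<forall>w. A *v w = 0 \<longrightarrow> c \<bullet> w = (\<Sum>i\<in>UNIV. snd (F k)$i * fst (F k)$i * w$i)) \<and> norm (fst (F k)) > (real k + 1) * (c \<bullet> fst (F k))"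
    by (rule choice[THEN exE])
  define U where "U k = fst (F k)" for k
  define P where "P k = snd (F k)" for k
  have UP: "\<And>k. (\<forall>i. 0 < P k$i) \<and> A *v U k = 0 \<and>
     (\<forall>w. A *v w = 0 \<longrightarrow> c \<bullet> w = (\<Sum>i\<in>UNIV. P k$i * U k$i * w$i)) \<and> norm (U k) > (real k + 1) * (c \<bullet> U k)"
    unfolding U_def P_def using F by blast
  have cu_nn: "c \<bullet> U k \<ge> 0" for k
  proof -
    have "c \<bullet> U k = (\<Sum>i\<in>UNIV. P k$i * U k$i * U k$i)" using UP[of k] by blast
    also have "\<dots> \<ge> 0"
    proof (intro sum_nonneg)
      fix i
      have "P k $ i > 0" using UP[of k] by blast
      thus "0 \<le> P k $ i * U k $ i * U k $ i" by (simp add: mult.assoc)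
    qed
    finally show ?thesis .
  qed
  have Upos: "norm (U k) > 0" for k
  proof -
    have "(real k + 1) * (c \<bullet> U k) \<ge> 0" using cu_nn[of k] by simp
    thus ?thesis using UP[of k] by linarith
  qed
  define V where "V k = U k /\<^sub>R norm (U k)" for k
  have Vn: "norm (V k) = 1" for k using Upos[of k] by (simp add: V_def)
  have VA: "A *v V k = 0" for k using UP[of k] by (simp add: V_def matrix_vector_mult_scaleR)
  define Q where "Q k = norm (U k) *\<^sub>R P k" for k
  have QP: "\<forall>i. 0 < Q k $ i" for k using UP[of k] Upos[of k] by (simp add: Q_def)
  have Vid: "A *v w = 0 \<Longrightarrow> c \<bullet> w = (\<Sum>i\<in>UNIV. Q k$i * V k$i * w$i)" for k w
  proof -
    assume w: "A *v w = 0"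
    have "c \<bullet> w = (\<Sum>i\<in>UNIV. P k$i * U k$i * w$i)" using UP[of k] w by blast
    also have "\<dots> = (\<Sum>i\<in>UNIV. Q k$i * V k$i * w$i)"
      using Upos[of k] by (intro sum.cong) (auto simp: Q_def V_def)
    finally show ?thesis .
  qed
  have Vc: "c \<bullet> V k \<le> 1 / (real k + 1)" for k
  proof -
    have lt: "(real k + 1) * (c \<bullet> U k) < norm (U k)" using UP[of k] by blast
    have "c \<bullet> U k \<le> norm (U k) / (real k + 1)" using lt
      by (simp add: field_simps)
    then show ?thesis using Upos[of k] by (simp add: V_def field_simps)
  qed
  have "compact (sphere (0::real^'n) 1)" by simp
  moreover have "\<forall>k. V k \<in> sphere 0 1" using Vn by simp
  ultimately obtain v r where v: "v \<in> sphere 0 1" and r: "strict_mono r" and lim: "(V \<circ> r) \<longlonglongrightarrow> v"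
    unfolding compact_def by blast
  have vn: "v \<noteq> 0" using v by auto
  have "(\<lambda>k. A *v (V \<circ> r) k) \<longlonglongrightarrow> A *v v"
    using bounded_linear.tendsto[OF matrix_vector_mul_bounded_linear lim] by simp
  hence vA: "A *v v = 0" using VA by (simp add: LIMSEQ_const_iff o_def)
  have cv: "c \<bullet> v \<le> 0"
  proof -
    have l1: "(\<lambda>k. c \<bullet> (V \<circ> r) k) \<longlonglongrightarrow> c \<bullet> v" using tendsto_inner[OF tendsto_const lim] by simp
    have l2: "(\<lambda>k. 1 / (real k + 1)) \<longlonglongrightarrow> (0::real)"
      using LIMSEQ_inverse_real_of_nat by (simp add: inverse_eq_divide add.commute)
    have "c \<bullet> (V \<circ> r) k \<le> 1 / (real k + 1)" for k
    proof -
      have "k \<le> r k" using r by (simp add: seq_suble)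
      hence "1 / (real (r k) + 1) \<le> 1 / (real k + 1)" by (simp add: frac_le)
      thus ?thesis using Vc[of "r k"] by simp
    qed
    thus ?thesis using LIMSEQ_le[OF l1 l2] by simp
  qed
  have ev: "\<forall>\<^sub>F k in sequentially. \<forall>i. v$i \<noteq> 0 \<longrightarrow> (V \<circ> r) k $ i * v$i > 0"
  proof (rule eventually_all_finite)
    fix i
    show "\<forall>\<^sub>F k in sequentially. v$i \<noteq> 0 \<longrightarrow> (V \<circ> r) k $ i * v$i > 0"
    proof (cases "v$i = 0")
      case True then show ?thesis by simp
    next
      case False
      have "(\<lambda>k. (V \<circ> r) k $ i * v$i) \<longlonglongrightarrow> v$i * v$i"
        by (intro tendsto_intros lim)
      moreover have "v$i * v$i > 0" using False not_real_square_gt_zero by blast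
      ultimately show ?thesis using order_tendstoD(1) by fastforce
    qed
  qed
  then obtain k where k: "\<forall>i. v$i \<noteq> 0 \<longrightarrow> V (r k) $ i * v$i > 0"
  proof -
    from \<open>\<forall>\<^sub>F k in sequentially. \<forall>i. v$i \<noteq> 0 \<longrightarrow> (V \<circ> r) k $ i * v$i > 0\<close>
    obtain N where "\<forall>k\<ge>N. \<forall>i. v$i \<noteq> 0 \<longrightarrow> (V \<circ> r) k $ i * v$i > 0"
      unfolding eventually_sequentially by blast
    hence "\<forall>i. v$i \<noteq> 0 \<longrightarrow> V (r N) $ i * v$i > 0" by simp
    thus ?thesis using that by blast
  qed
  obtain j where j: "v$j \<noteq> 0" using vn by (metis vec_eq_iff zero_index)
  have "c \<bullet> v = (\<Sum>i\<in>UNIV. Q (r k)$i * V (r k)$i * v$i)" using Vid[OF vA] by blast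
  also have "\<dots> > 0"
  proof (rule sum_pos2[where i=j])
    show "0 < Q (r k)$j * V (r k)$j * v$j" using QP k j by (simp add: mult.assoc)
    show "\<And>i. i \<in> UNIV \<Longrightarrow> 0 \<le> Q (r k)$i * V (r k)$i * v$i"
    proof -
      fix i
      show "0 \<le> Q (r k)$i * V (r k)$i * v$i"
      proof (cases "v$i = 0")
        case True then show ?thesis by simp
      next
        case False
        hence "V (r k)$i * v$i > 0" using k by blast
        moreover have "Q (r k)$i > 0" using QP by blast
        ultimately show ?thesis by (simp add: mult.assoc)
      qed
    qed
  qed auto
  finally show False using cv by simp
qed

lemma diagv_mult: "diagv x *v v = (\<chi> i. x$i * v$i)"
proof -
  have "(\<Sum>j\<in>UNIV. (if i = j then x$i else 0) * v$j) = (\<Sum>j\<in>UNIV. if i = j then x$i * v$j else 0)" for i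
    by (rule sum.cong) auto
  thus ?thesis by (simp add: diagv_def matrix_vector_mult_def vec_eq_iff)
qed

lemma diagv2_mult: "(diagv x ** diagv x) *v v = (\<chi> i. x$i * x$i * v$i)"
  by (simp add: matrix_vector_mul_assoc[symmetric] diagv_mult vec_eq_iff mult.assoc)

lemma inner_Av: "z \<bullet> (A *v w) = (transpose A *v z) \<bullet> (w::real^'n)"
  by (metis dot_lmul_matrix transpose_matrix_vector)

lemma gram_invertible:
  fixes A :: "real^'n^'m"
  assumes rk: "rank A = CARD('m)" and x: "\<forall>i. 0 < x$i"
  shows "invertible (A ** diagv x ** diagv x ** transpose A)"
proof -
  have inj: "inj ((*v) (transpose A))" using rk rank_transpose[of A] full_rank_injective[of "transpose A"] by simp
  have "z = 0" if z: "(A ** diagv x ** diagv x ** transpose A) *v z = 0" for z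
  proof -
    define t where "t = transpose A *v z"
    have "(A ** diagv x ** diagv x ** transpose A) *v z = A *v ((diagv x ** diagv x) *v t)"
      by (simp add: t_def matrix_vector_mul_assoc[symmetric] matrix_mul_assoc)
    hence "0 = z \<bullet> (A *v ((diagv x ** diagv x) *v t))" using z by simp
    also have "\<dots> = t \<bullet> ((diagv x ** diagv x) *v t)" by (simp add: inner_Av t_def)
    also have "\<dots> = (\<Sum>i\<in>UNIV. (x$i * t$i)^2)" by (simp add: diagv2_mult inner_vec_def power2_eq_square mult_ac)
    finally have "(\<Sum>i\<in>UNIV. (x$i * t$i)^2) = 0" by simp
    hence "\<forall>i. (x$i * t$i)^2 = 0" by (simp add: sum_nonneg_eq_0_iff)
    hence "t = 0" using x by (simp add: vec_eq_iff) (metis order_less_irrefl)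
    thus "z = 0" using inj unfolding t_def by (metis inj_eq matrix_vector_mult_0_right)
  qed
  thus ?thesis by (simp add: invertible_left_inverse matrix_left_invertible_ker)
qed

lemma slack_props:
  fixes A :: "real^'n^'m"
  assumes rk: "rank A = CARD('m)" and x: "\<forall>i. 0 < x$i"
  shows "A *v ((diagv x ** diagv x) *v slack A c x) = 0"
    and "A *v w = 0 \<Longrightarrow> c \<bullet> w = (\<Sum>i\<in>UNIV. (1/(x$i*x$i)) * ((diagv x ** diagv x) *v slack A c x)$i * w$i)"
proof -
  let ?M = "A ** diagv x ** diagv x ** transpose A"
  have "invertible ?M" using gram_invertible[OF rk x] .
  hence MI: "?M ** matrix_inv ?M = mat 1" unfolding invertible_def matrix_inv_def by (rule someI2_ex) auto
  let ?b = "(A ** diagv x ** diagv x) *v c"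
  have e1: "A *v ((diagv x ** diagv x) *v slack A c x) = ?b - ?M *v (matrix_inv ?M *v ?b)"
    unfolding slack_def dual_y_def
    by (simp only: matrix_vector_mult_diff_distrib matrix_vector_mul_assoc matrix_mul_assoc)
  have e2: "?M *v (matrix_inv ?M *v ?b) = ?b"
    by (subst matrix_vector_mul_assoc[of ?M "matrix_inv ?M" ?b]) (simp only: MI matrix_vector_mul_lid)
  show "A *v ((diagv x ** diagv x) *v slack A c x) = 0" using e1 e2 by simp
  assume w: "A *v w = 0"
  have "(\<Sum>i\<in>UNIV. (1/(x$i*x$i)) * ((diagv x ** diagv x) *v slack A c x)$i * w$i) = slack A c x \<bullet> w"
    unfolding inner_vec_def diagv2_mult using x by (intro sum.cong) (auto simp: field_simps less_imp_neq[symmetric])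
  also have "\<dots> = c \<bullet> w" using w by (simp add: slack_def inner_diff_left dot_lmul_matrix)
  finally show "c \<bullet> w = (\<Sum>i\<in>UNIV. (1/(x$i*x$i)) * ((diagv x ** diagv x) *v slack A c x)$i * w$i)" ..
qed


lemma key2:
  fixes A :: "real^'n^'m" and c :: "real^'n"
  assumes rk: "rank A = CARD('m)"
  shows "\<exists>M>0. \<forall>x. (\<forall>i. 0 < x$i) \<longrightarrow>
     norm ((diagv x ** diagv x) *v slack A c x) \<le> M * (c \<bullet> ((diagv x ** diagv x) *v slack A c x))"
proof -
  obtain M where M: "M > 0" and H: "\<forall>u (p::real^'n). (\<forall>i. 0 < p$i) \<longrightarrow> A *v u = 0 \<longrightarrow>
     (\<forall>w. A *v w = 0 \<longrightarrow> c \<bullet> w = (\<Sum>i\<in>UNIV. p$i * u$i * w$i)) \<longrightarrow> norm u \<le> M * (c \<bullet> u)"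
    using key[of A c] by blast
  show ?thesis
  proof (intro exI[of _ M] conjI allI impI M)
    fix x :: "real^'n" assume x: "\<forall>i. 0 < x$i"
    show "norm ((diagv x ** diagv x) *v slack A c x) \<le> M * (c \<bullet> ((diagv x ** diagv x) *v slack A c x))"
    proof -
      have p: "\<forall>i. 0 < (\<chi> i. 1/(x$i*x$i)) $ i" using x by simp
      have w: "\<forall>w. A *v w = 0 \<longrightarrow> c \<bullet> w = (\<Sum>i\<in>UNIV. (\<chi> i. 1/(x$i*x$i)) $ i * ((diagv x ** diagv x) *v slack A c x)$i * w$i)"
        using slack_props(2)[OF rk x] by simp
      show ?thesis using H p slack_props(1)[OF rk x] w by blast
    qed
  qed
qed

theorem theorem5:
  fixes A :: "real^'n^'m" and b :: "real^'m" and c :: "real^'n"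
    and \<alpha> \<beta> :: real and x0 xstar :: "real^'n"
  assumes standing: "lp_standing A b c"
    and Q: "(\<alpha>, \<beta>) \<in> Qset"
    and x0_pos: "\<forall>i. 0 < x0 $ i" and x0_feas: "A *v x0 = b"
    and wd_pos: "\<forall>k i. 0 < gafs A c \<alpha> \<beta> x0 k $ i"
    and wd_gam: "\<forall>k. \<exists>i. 0 < (diagv (gafs A c \<alpha> \<beta> x0 k) *v slack A c (gafs A c \<alpha> \<beta> x0 k)) $ i"
    and wd_diff: "\<forall>k. gafs A c \<alpha> \<beta> x0 (Suc k) \<noteq> gafs A c \<alpha> \<beta> x0 k"
    and lim: "gafs A c \<alpha> \<beta> x0 \<longlonglongrightarrow> xstar"
  shows "\<exists>\<delta>>0. \<exists>R>0. \<forall>k.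
      let xk = gafs A c \<alpha> \<beta> x0 k; gap = c \<bullet> xk - c \<bullet> xstar in
        gap \<ge> norm (xk - xstar) / R
      \<and> gap \<ge> \<delta> * (\<Sum>i\<in>{i. xstar $ i = 0}. xk $ i)
      \<and> gap \<ge> \<delta> * (\<Sum>i\<in>{i. xstar $ i > 0}. \<bar>xk $ i - xstar $ i\<bar>)"
proof -
  define X where "X = gafs A c \<alpha> \<beta> x0"
  have rk: "rank A = CARD('m)" using standing by (simp add: lp_standing_def)
  have ab: "0 < \<alpha>" "0 \<le> \<beta>" using Q by (auto simp: Qset_def)
  obtain M where M: "M > 0" and HM: "\<forall>x. (\<forall>i. 0 < x$i) \<longrightarrow>
     norm ((diagv x ** diagv x) *v slack A c x) \<le> M * (c \<bullet> ((diagv x ** diagv x) *v slack A c x))"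
    using key2[OF rk, of c] by blast
  have step: "norm (as_step A c \<alpha> (X k)) \<le> M * (c \<bullet> as_step A c \<alpha> (X k))" for k
  proof -
    let ?v = "diagv (X k) *v slack A c (X k)"
    obtain i where i: "0 < ?v $ i" using wd_gam unfolding X_def by blast
    have fin: "finite {?v $ i |i. 0 < ?v $ i}" by simp
    have "?v $ i \<le> gam ?v" unfolding gam_def using i fin by (intro Max_ge) auto
    hence g: "gam ?v > 0" using i by linarith
    let ?u = "(diagv (X k) ** diagv (X k)) *v slack A c (X k)"
    have u: "norm ?u \<le> M * (c \<bullet> ?u)" using HM wd_pos unfolding X_def by blast
    have def: "as_step A c \<alpha> (X k) = (\<alpha> / gam ?v) *\<^sub>R ?u" unfolding as_step_def ..
    have ag: "\<alpha> / gam ?v \<ge> 0" using g ab by simp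
    have "norm (as_step A c \<alpha> (X k)) = (\<alpha> / gam ?v) * norm ?u"
      unfolding def norm_scaleR abs_of_nonneg[OF ag] ..
    also have "\<dots> \<le> (\<alpha> / gam ?v) * (M * (c \<bullet> ?u))"
      using u ag by (rule mult_left_mono)
    also have "\<dots> = M * (c \<bullet> as_step A c \<alpha> (X k))" unfolding def inner_scaleR_right by simp
    finally show ?thesis .
  qed
  have dk: "norm (X (Suc k) - X k) \<le> M * (c \<bullet> X k - c \<bullet> X (Suc k))" for k
  proof (induction k)
    case 0
    then show ?case using step[of 0] by (simp add: X_def inner_diff_right)
  next
    case (Suc k)
    define t where "t = \<beta> / infnorm (matrix_inv (diagv (X (Suc k))) *v (X (Suc k) - X k))"
    have t: "t \<ge> 0" using ab by (simp add: t_def infnorm_pos_le)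
    have eq: "X (Suc (Suc k)) - X (Suc k) = t *\<^sub>R (X (Suc k) - X k) - as_step A c \<alpha> (X (Suc k))"
      by (simp add: X_def t_def Let_def)
    have "norm (X (Suc (Suc k)) - X (Suc k)) \<le> t * norm (X (Suc k) - X k) + norm (as_step A c \<alpha> (X (Suc k)))"
      unfolding eq using t norm_triangle_ineq4[of "t *\<^sub>R (X (Suc k) - X k)" "as_step A c \<alpha> (X (Suc k))"] by simp
    also have "\<dots> \<le> t * (M * (c \<bullet> X k - c \<bullet> X (Suc k))) + M * (c \<bullet> as_step A c \<alpha> (X (Suc k)))"
      using Suc step[of "Suc k"] t by (intro add_mono mult_left_mono) auto
    also have "\<dots> = M * (c \<bullet> X (Suc k) - c \<bullet> X (Suc (Suc k)))"
    proof -
      have h: "c \<bullet> as_step A c \<alpha> (X (Suc k)) = t * (c \<bullet> X (Suc k) - c \<bullet> X k) - (c \<bullet> X (Suc (Suc k)) - c \<bullet> X (Suc k))"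
        using arg_cong[OF eq, of "inner c"] by (simp add: inner_diff_right)
      show ?thesis unfolding h by (simp add: algebra_simps)
    qed
    finally show ?case .
  qed
  have part: "norm (X N - X k) \<le> M * (c \<bullet> X k - c \<bullet> X N)" if "k \<le> N" for k N
    using that
  proof (induction N rule: dec_induct)
    case base then show ?case by simp
  next
    case (step N)
    have "norm (X (Suc N) - X k) \<le> norm (X N - X k) + norm (X (Suc N) - X N)"
    proof -
      have "X (Suc N) - X k = (X N - X k) + (X (Suc N) - X N)" by simp
      thus ?thesis using norm_triangle_ineq[of "X N - X k" "X (Suc N) - X N"] by simp
    qed
    also have "\<dots> \<le> M * (c \<bullet> X k - c \<bullet> X N) + M * (c \<bullet> X N - c \<bullet> X (Suc N))"
      using step.IH dk[of N] by (intro add_mono)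
    also have "\<dots> = M * (c \<bullet> X k - c \<bullet> X (Suc N))" by (simp add: algebra_simps)
    finally show ?case .
  qed
  have main: "norm (X k - xstar) \<le> M * (c \<bullet> X k - c \<bullet> xstar)" for k
  proof -
    have l: "X \<longlonglongrightarrow> xstar" using lim X_def by simp
    have l1: "(\<lambda>N. norm (X N - X k)) \<longlonglongrightarrow> norm (xstar - X k)" by (intro tendsto_intros l)
    have l2: "(\<lambda>N. M * (c \<bullet> X k - c \<bullet> X N)) \<longlonglongrightarrow> M * (c \<bullet> X k - c \<bullet> xstar)" by (intro tendsto_intros l)
    have "norm (xstar - X k) \<le> M * (c \<bullet> X k - c \<bullet> xstar)"
      by (rule tendsto_le[OF _ l2 l1]) (auto intro: part simp: eventually_sequentially)
    thus ?thesis by (simp add: norm_minus_commute)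
  qed
  define \<delta> where "\<delta> = 1 / (M * real CARD('n))"
  have dpos: "\<delta> > 0" using M by (simp add: \<delta>_def)
  have sumb: "(\<Sum>i\<in>S. \<bar>z $ i\<bar>) \<le> real CARD('n) * norm z" for S :: "'n set" and z :: "real^'n"
  proof -
    have "(\<Sum>i\<in>S. \<bar>z $ i\<bar>) \<le> (\<Sum>i\<in>S. norm z)" by (intro sum_mono component_le_norm_cart)
    also have "\<dots> = real (card S) * norm z" by simp
    also have "\<dots> \<le> real CARD('n) * norm z"
      by (intro mult_right_mono) (auto simp: card_mono)
    finally show ?thesis .
  qed
  have fin: "\<delta> * (real CARD('n) * norm z) = norm z / M" for z :: "real^'n"
    using M by (simp add: \<delta>_def field_simps)
  have all: "\<forall>k. let xk = gafs A c \<alpha> \<beta> x0 k; gap = c \<bullet> xk - c \<bullet> xstar in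
        gap \<ge> norm (xk - xstar) / M
      \<and> gap \<ge> \<delta> * (\<Sum>i\<in>{i. xstar $ i = 0}. xk $ i)
      \<and> gap \<ge> \<delta> * (\<Sum>i\<in>{i. xstar $ i > 0}. \<bar>xk $ i - xstar $ i\<bar>)"
  proof
    fix k
    let ?z = "X k - xstar"
    have g: "norm ?z / M \<le> c \<bullet> X k - c \<bullet> xstar" using main[of k] M by (simp add: field_simps)
    have s1: "(\<Sum>i\<in>{i. xstar $ i = 0}. X k $ i) = (\<Sum>i\<in>{i. xstar $ i = 0}. \<bar>?z $ i\<bar>)"
      using wd_pos unfolding X_def by (intro sum.cong) (auto simp: less_imp_le)
    have s2: "(\<Sum>i\<in>{i. xstar $ i > 0}. \<bar>X k $ i - xstar $ i\<bar>) = (\<Sum>i\<in>{i. xstar $ i > 0}. \<bar>?z $ i\<bar>)"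
      by simp
    have a: "\<delta> * (\<Sum>i\<in>S. \<bar>?z $ i\<bar>) \<le> norm ?z / M" for S
      using mult_left_mono[OF sumb[where S=S and z="?z"], of \<delta>] dpos fin[of ?z] by simp
    show "let xk = gafs A c \<alpha> \<beta> x0 k; gap = c \<bullet> xk - c \<bullet> xstar in
        gap \<ge> norm (xk - xstar) / M
      \<and> gap \<ge> \<delta> * (\<Sum>i\<in>{i. xstar $ i = 0}. xk $ i)
      \<and> gap \<ge> \<delta> * (\<Sum>i\<in>{i. xstar $ i > 0}. \<bar>xk $ i - xstar $ i\<bar>)"
      unfolding Let_def X_def[symmetric] s1 s2 using g a[of "{i. xstar $ i = 0}"] a[of "{i. xstar $ i > 0}"]
      by linarith
  qed
  show ?thesis using all dpos M by blast
qed

end
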